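(* Let $(\mu,\nu)\in\boldsymbol{\mathcal P}$ and $\mathcal F=\mathcal F_{(\mu,\nu)}$. If $(x,y)\in\mathbb S$ with $x+y\ge2\beta$, then $$d_W\big(\mathcal F(x,y),\delta_{x/(x+y)}\big)<2\sqrt{\frac{\beta}{x+y}}.$$
   Context: Fix $0<m_0\le\beta<\infty$. $\boldsymbol{\mathcal P}$: pairs $(\mu,\nu)$ of probability measures on $[0,\beta]$ with $\int k\,\mu(dk)=\int k\,\nu(dk)\ge m_0$. $d_W$: 1-Wasserstein metric; $\delta_t$: point mass at $t$. $\mathbb S=[0,\infty)^2\setminus\{(0,0)\}$. RRU: with $\{U_n\}$ i.i.d. uniform$[0,1]$ independent of i.i.d. $\{(V_n,W_n)\}$ with uniform$[0,1]$ marginals, $R_X(n)=q_\mu(V_n)$, $R_Y(n)=q_\nu(W_n)$ (quantile functions), $X_0=x,Y_0=y$, $X_{n+1}=X_n+R_X(n+1)\mathbb I(n+1)$, $Y_{n+1}=Y_n+R_Y(n+1)(1-\mathbb I(n+1))$, $\mathbb I(n+1)=\mathbf 1\{U_{n+1}\le X_n/(X_n+Y_n)\}$; $Z_n(x,y)=X_n/(X_n+Y_n)$ converges a.s. to $Z_\infty(x,y)$, and $\mathcal F_{(\mu,\nu)}(x,y)$ is the law of $Z_\infty(x,y)$. *)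

theory Defs
  imports "HOL-Probability.Probability"
begin

definition prob_on_interval :: "real \<Rightarrow> real measure \<Rightarrow> bool" where
  "prob_on_interval \<beta> \<mu> \<longleftrightarrow> prob_space \<mu> \<and> sets \<mu> = sets borel \<and> measure \<mu> {0..\<beta>} = 1"

definition in_P :: "real \<Rightarrow> real \<Rightarrow> real measure \<Rightarrow> real measure \<Rightarrow> bool" where
  "in_P m0 \<beta> \<mu> \<nu> \<longleftrightarrow> prob_on_interval \<beta> \<mu> \<and> prob_on_interval \<beta> \<nu> \<and>
     (\<integral>k. k \<partial>\<mu>) = (\<integral>k. k \<partial>\<nu>) \<and> (\<integral>k. k \<partial>\<mu>) \<ge> m0"

definition quantile :: "real measure \<Rightarrow> real \<Rightarrow> real" where
  "quantile \<mu> v = Inf {t. v \<le> measure \<mu> {..t}}"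

fun rru :: "real measure \<Rightarrow> real measure \<Rightarrow> real \<Rightarrow> real \<Rightarrow>
    (nat \<Rightarrow> real) \<Rightarrow> (nat \<Rightarrow> real) \<Rightarrow> (nat \<Rightarrow> real) \<Rightarrow> nat \<Rightarrow> real \<times> real" where
  "rru \<mu> \<nu> x y U V W 0 = (x, y)"
| "rru \<mu> \<nu> x y U V W (Suc n) =
     (let (X, Y) = rru \<mu> \<nu> x y U V W n in
      if U (Suc n) \<le> X / (X + Y)
      then (X + quantile \<mu> (V (Suc n)), Y)
      else (X, Y + quantile \<nu> (W (Suc n))))"

definition rru_Z :: "real measure \<Rightarrow> real measure \<Rightarrow> real \<Rightarrow> real \<Rightarrow>
    (nat \<Rightarrow> real) \<Rightarrow> (nat \<Rightarrow> real) \<Rightarrow> (nat \<Rightarrow> real) \<Rightarrow> nat \<Rightarrow> real" where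
  "rru_Z \<mu> \<nu> x y U V W n =
     (let (X, Y) = rru \<mu> \<nu> x y U V W n in X / (X + Y))"

definition wasserstein1 :: "real measure \<Rightarrow> real measure \<Rightarrow> ennreal" where
  "wasserstein1 P Q = (INF \<pi> \<in> {\<pi>. prob_space \<pi> \<and> sets \<pi> = sets (borel \<Otimes>\<^sub>M borel) \<and>
        distr \<pi> borel fst = P \<and> distr \<pi> borel snd = Q}.
      \<integral>\<^sup>+ z. ennreal \<bar>fst z - snd z\<bar> \<partial>\<pi>)"

end

theory Submission imports Defs begin

lemma F_neg:
  assumes P: "prob_on_interval \<beta> \<mu>" and t: "t < 0"
  shows "measure \<mu> {..t} = 0"
proof -
  interpret prob_space \<mu> using P by (simp add: prob_on_interval_def)
  have s: "sets \<mu> = sets borel" using P by (simp add: prob_on_interval_def)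
  have "measure \<mu> {..t} \<le> measure \<mu> (space \<mu> - {0..\<beta>})"
    using t s by (intro finite_measure_mono) (auto simp: sets_eq_imp_space_eq[OF s])
  also have "\<dots> = 0" using P s by (simp add: prob_compl prob_on_interval_def)
  finally show ?thesis using measure_nonneg[of \<mu> "{..t}"] by linarith
qed

lemma F_big:
  assumes P: "prob_on_interval \<beta> \<mu>" and t: "\<beta> \<le> t"
  shows "measure \<mu> {..t} = 1"
proof -
  interpret prob_space \<mu> using P by (simp add: prob_on_interval_def)
  have s: "sets \<mu> = sets borel" using P by (simp add: prob_on_interval_def)
  have "measure \<mu> {0..\<beta>} \<le> measure \<mu> {..t}"
    using t s by (intro finite_measure_mono) auto
  then show ?thesis using P prob_le_1[of "{..t}"] unfolding prob_on_interval_def by linarith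
qed

lemma beta_nonneg: "prob_on_interval \<beta> \<mu> \<Longrightarrow> 0 \<le> \<beta>"
  by (rule ccontr) (simp add: prob_on_interval_def)

lemma quantile_facts:
  assumes P: "prob_on_interval \<beta> \<mu>" and v: "0 < v" "v \<le> 1"
  shows "0 \<le> quantile \<mu> v" "quantile \<mu> v \<le> \<beta>"
    "\<And>t. quantile \<mu> v \<le> t \<longleftrightarrow> v \<le> measure \<mu> {..t}"
proof -
  interpret prob_space \<mu> using P by (simp add: prob_on_interval_def)
  have s: "sets \<mu> = sets borel" using P by (simp add: prob_on_interval_def)
  define T where "T = {t. v \<le> measure \<mu> {..t}}"
  have q: "quantile \<mu> v = Inf T" by (simp add: quantile_def T_def)
  have bT: "\<beta> \<in> T" using F_big[OF P] v by (simp add: T_def)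
  have lb: "\<And>t. t \<in> T \<Longrightarrow> 0 \<le> t"
  proof (rule ccontr)
    fix t assume "t \<in> T" "\<not> 0 \<le> t"
    then show False using F_neg[OF P, of t] v by (simp add: T_def)
  qed
  have bdd: "bdd_below T" using lb by (auto simp: bdd_below_def)
  show q0: "0 \<le> quantile \<mu> v" unfolding q using bT lb by (intro cInf_greatest) auto
  show "quantile \<mu> v \<le> \<beta>" unfolding q using bT bdd by (intro cInf_lower) auto
  have mono: "\<And>a b. a \<le> b \<Longrightarrow> measure \<mu> {..a} \<le> measure \<mu> {..b}"
    using s by (intro finite_measure_mono) auto
  fix t
  show "quantile \<mu> v \<le> t \<longleftrightarrow> v \<le> measure \<mu> {..t}"
  proof
    assume "v \<le> measure \<mu> {..t}"
    then show "quantile \<mu> v \<le> t" unfolding q using bdd by (intro cInf_lower) (auto simp: T_def)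
  next
    assume qt: "quantile \<mu> v \<le> t"
    have fbm: "finite_borel_measure \<mu>"
      using s by unfold_locales simp
    have rc: "continuous (at_right (Inf T)) (cdf \<mu>)"
      using finite_borel_measure.cdf_is_right_cont[OF fbm] by simp
    then have lim: "(cdf \<mu> \<longlongrightarrow> cdf \<mu> (Inf T)) (at_right (Inf T))"
      by (simp add: continuous_within)
    have ev: "eventually (\<lambda>s. v \<le> cdf \<mu> s) (at_right (Inf T))"
    proof -
      have "eventually (\<lambda>s. Inf T < s) (at_right (Inf T))"
        by (simp add: eventually_at_right_less)
      then show ?thesis
      proof eventually_elim
        case (elim s)
        then obtain s' where "s' \<in> T" "s' < s" using bT cInf_lessD[of T s] by blast
        then show ?case using mono[of s' s] by (simp add: T_def cdf_def)
      qed
    qed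
    have "v \<le> cdf \<mu> (Inf T)"
      by (rule tendsto_lowerbound[OF lim ev]) simp
    then show "v \<le> measure \<mu> {..t}" using mono[of "Inf T" t] qt q by (simp add: cdf_def)
  qed
qed

definition qc :: "real \<Rightarrow> real measure \<Rightarrow> real \<Rightarrow> real" where
  "qc \<beta> \<mu> v = (if v \<le> 0 then 0 else if 1 < v then \<beta> else quantile \<mu> v)"

abbreviation "unif \<equiv> uniform_measure lborel {0..1::real}"

lemma qc_range:
  assumes P: "prob_on_interval \<beta> \<mu>"
  shows "0 \<le> qc \<beta> \<mu> v" "qc \<beta> \<mu> v \<le> \<beta>"
  using quantile_facts[OF P, of v] beta_nonneg[OF P] by (auto simp: qc_def)

lemma qc_eq: "0 < v \<Longrightarrow> v \<le> 1 \<Longrightarrow> qc \<beta> \<mu> v = quantile \<mu> v"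
  by (simp add: qc_def)

lemma qc_mono:
  assumes P: "prob_on_interval \<beta> \<mu>"
  shows "mono (qc \<beta> \<mu>)"
proof (rule monoI)
  fix u v :: real assume uv: "u \<le> v"
  show "qc \<beta> \<mu> u \<le> qc \<beta> \<mu> v"
  proof (cases "u \<le> 0 \<or> 1 < v")
    case True then show ?thesis using qc_range[OF P, of u] qc_range[OF P, of v] uv
      by (auto simp: qc_def)
  next
    case False
    then have "0 < u" "v \<le> 1" by auto
    then have "quantile \<mu> u \<le> quantile \<mu> v"
      using quantile_facts(3)[OF P, of u "quantile \<mu> v"] quantile_facts(3)[OF P, of v "quantile \<mu> v"] uv
      by auto
    then show ?thesis using \<open>0 < u\<close> \<open>v \<le> 1\<close> uv by (simp add: qc_def)
  qed
qed

lemma qc_meas[measurable]: "prob_on_interval \<beta> \<mu> \<Longrightarrow> qc \<beta> \<mu> \<in> borel_measurable borel"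
  by (rule borel_measurable_mono[OF qc_mono])

lemma unif_prob: "prob_space unif"
  by (rule prob_space_uniform_measure) auto

lemma measure_unif: "B \<in> sets borel \<Longrightarrow> measure unif B = measure lborel ({0..1} \<inter> B)"
  by (subst measure_uniform_measure) auto

lemma distr_qc:
  assumes P: "prob_on_interval \<beta> \<mu>"
  shows "distr unif borel (qc \<beta> \<mu>) = \<mu>"
proof (rule cdf_unique)
  have s: "sets \<mu> = sets borel" using P by (simp add: prob_on_interval_def)
  interpret U: prob_space unif by (rule unif_prob)
  show "real_distribution (distr unif borel (qc \<beta> \<mu>))"
    unfolding real_distribution_def real_distribution_axioms_def
    using P by (auto intro!: U.prob_space_distr)
  show "real_distribution \<mu>"
    unfolding real_distribution_def real_distribution_axioms_def
    using P by (auto simp: prob_on_interval_def)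
  show "cdf (distr unif borel (qc \<beta> \<mu>)) = cdf \<mu>"
  proof
    fix t
    have pre: "qc \<beta> \<mu> -` {..t} \<in> sets borel"
      using measurable_sets[OF qc_meas[OF P], of "{..t}"] by simp
    have "cdf (distr unif borel (qc \<beta> \<mu>)) t = measure unif (qc \<beta> \<mu> -` {..t})"
      unfolding cdf_def using P pre by (subst measure_distr) auto
    also have "\<dots> = measure lborel ({0..1} \<inter> qc \<beta> \<mu> -` {..t})"
      using pre by (intro measure_unif)
    also have "\<dots> = measure \<mu> {..t}"
    proof (cases "t < 0")
      case True
      then have "{0..1} \<inter> qc \<beta> \<mu> -` {..t} = {}" using qc_range(1)[OF P] by (meson IntD2 equals0I order.trans vimage_eq atMost_iff not_le)
      then show ?thesis using F_neg[OF P True] by simp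
    next
      case False
      have F01: "0 \<le> measure \<mu> {..t}" "measure \<mu> {..t} \<le> 1"
        using P by (auto simp: prob_on_interval_def intro: prob_space.prob_le_1)
      have eq: "{0..1} \<inter> qc \<beta> \<mu> -` {..t} = {0..measure \<mu> {..t}}"
      proof (intro equalityI subsetI)
        fix v assume "v \<in> {0..1} \<inter> qc \<beta> \<mu> -` {..t}"
        then have v: "v \<in> {0..1}" "qc \<beta> \<mu> v \<le> t" by auto
        show "v \<in> {0..measure \<mu> {..t}}"
        proof (cases "v = 0")
          case True then show ?thesis using F01 by simp
        next
          case False then show ?thesis using v quantile_facts(3)[OF P, of v t] by (auto simp: qc_def)
        qed
      next
        fix v assume v: "v \<in> {0..measure \<mu> {..t}}"
        have "qc \<beta> \<mu> v \<le> t"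
        proof (cases "v = 0")
          case True then show ?thesis using False by (simp add: qc_def)
        next
          case False then show ?thesis using v F01 quantile_facts(3)[OF P, of v t] by (auto simp: qc_def)
        qed
        then show "v \<in> {0..1} \<inter> qc \<beta> \<mu> -` {..t}" using v F01 by auto
      qed
      then show ?thesis using F01 by simp
    qed
    finally show "cdf (distr unif borel (qc \<beta> \<mu>)) t = cdf \<mu> t" by (simp add: cdf_def)
  qed
qed

lemma qc_integral:
  assumes P: "prob_on_interval \<beta> \<mu>"
  shows "(\<integral>v. qc \<beta> \<mu> v \<partial>unif) = (\<integral>k. k \<partial>\<mu>)"
proof -
  have "(\<integral>k. k \<partial>\<mu>) = (\<integral>k. k \<partial>distr unif borel (qc \<beta> \<mu>))" using distr_qc[OF P] by simp
  also have "\<dots> = (\<integral>v. qc \<beta> \<mu> v \<partial>unif)" using P by (subst integral_distr) auto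
  finally show ?thesis by simp
qed

lemma qc_nn_integral:
  assumes P: "prob_on_interval \<beta> \<mu>" and f: "f \<in> borel_measurable borel"
  shows "(\<integral>\<^sup>+v. f (qc \<beta> \<mu> v) \<partial>unif) = (\<integral>\<^sup>+k. f k \<partial>\<mu>)"
proof -
  have "(\<integral>\<^sup>+k. f k \<partial>\<mu>) = (\<integral>\<^sup>+k. f k \<partial>distr unif borel (qc \<beta> \<mu>))" using distr_qc[OF P] by simp
  also have "\<dots> = (\<integral>\<^sup>+v. f (qc \<beta> \<mu> v) \<partial>unif)" using P f by (subst nn_integral_distr) auto
  finally show ?thesis by simp
qed

lemma inv_bound:
  fixes S k \<beta> :: real
  assumes "S > 0" "0 \<le> k" "k \<le> \<beta>"
  shows "1/(S+k) \<le> 1/S - k/S^2 + \<beta>*k/S^3"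
proof -
  have h1: "S*k \<le> S*\<beta>" using assms by (simp add: mult_left_mono)
  have h2: "0 \<le> \<beta>*k" using assms by simp
  have "(S+k)*(S-\<beta>) = S^2 + S*k - S*\<beta> - \<beta>*k" by (simp add: algebra_simps power2_eq_square)
  then have "(S+k)*(S-\<beta>) \<le> S^2" using h1 h2 by linarith
  then have "k*((S+k)*(S-\<beta>)) \<le> k*S^2" using assms by (intro mult_left_mono) auto
  moreover have pos: "S^3*(S+k) > 0" using assms by simp
  ultimately have "k*((S+k)*(S-\<beta>))/(S^3*(S+k)) \<le> k*S^2/(S^3*(S+k))"
    by (intro divide_right_mono) auto
  moreover have "k*((S+k)*(S-\<beta>))/(S^3*(S+k)) = (k*(S-\<beta>))*(S+k)/(S^3*(S+k))" by (simp add: ac_simps)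
  moreover have "\<dots> = k*(S-\<beta>)/S^3" using assms by (intro mult_divide_mult_cancel_right) auto
  moreover have "k*S^2/(S^3*(S+k)) = k*S^2/((S*(S+k))*S^2)"
    by (simp add: power2_eq_square power3_eq_cube ac_simps)
  moreover have "\<dots> = k/(S*(S+k))" using assms by (intro mult_divide_mult_cancel_right) auto
  ultimately have "k*(S-\<beta>)/S^3 \<le> k/(S*(S+k))" by simp
  moreover have "1/S - 1/(S+k) = k/(S*(S+k))" using assms by (simp add: field_simps)
  moreover have "k*(S-\<beta>)/S^3 = k/S^2 - \<beta>*k/S^3" using assms
    by (simp add: field_simps power2_eq_square power3_eq_cube)
  ultimately show ?thesis by linarith
qed

lemma lin_aux: "(a::real) = b + c + 2*x + y \<Longrightarrow> x \<le> p \<Longrightarrow> p \<le> q \<Longrightarrow> y \<le> q \<Longrightarrow> a \<le> b + c + 3*q"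
  by linarith

lemma stepX:
  fixes S Z z k \<beta> :: real
  assumes S: "S > 0" and Z: "0 \<le> Z" "Z \<le> 1" and z: "0 \<le> z" "z \<le> 1" and k: "0 \<le> k" "k \<le> \<beta>"
    and big: "2*\<beta> \<le> S"
  shows "((Z*S + k)/(S+k) - z)^2 + 3*\<beta>/(S+k) \<le>
     (Z-z)^2 + 3*\<beta>/S + k*(2*(Z-z)*(1-Z)/S + 3*(1-Z)*\<beta>/S^2 - 3*\<beta>/S^2 + 3*\<beta>^2/S^3)"
proof -
  define d where "d = k*(1-Z)/(S+k)"
  define d0 where "d0 = k*(1-Z)/S"
  have Sk: "S + k > 0" using S k by linarith
  have dd: "(Z*S + k)/(S+k) = Z + d" using Sk by (simp add: d_def field_simps)
  have e: "d0 - d = k^2*(1-Z)/(S*(S+k))" using S Sk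
    by (simp add: d_def d0_def field_simps power2_eq_square)
  have e0: "0 \<le> d0 - d" unfolding e using S Sk k Z by (intro divide_nonneg_pos mult_nonneg_nonneg) auto
  have "k^2*(1-Z)/(S*(S+k)) \<le> k^2*(1-Z)/(S*S)"
    using S Sk k Z by (intro divide_left_mono mult_nonneg_nonneg mult_left_mono mult_pos_pos) auto
  also have "\<dots> \<le> \<beta>*k*(1-Z)/S^2"
  proof -
    have "k^2*(1-Z) \<le> \<beta>*k*(1-Z)" using k Z
      by (intro mult_right_mono) (auto simp: power2_eq_square mult_right_mono)
    then show ?thesis using S by (simp add: power2_eq_square divide_right_mono)
  qed
  finally have e1: "d0 - d \<le> \<beta>*k*(1-Z)/S^2" unfolding e .
  have d0n: "0 \<le> d0" using S k Z by (simp add: d0_def)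
  have dn: "0 \<le> d" using Sk k Z by (simp add: d_def)
  have "d^2 \<le> d0^2" using e0 dn by (intro power_mono) auto
  also have "d0^2 = k^2*(1-Z)^2/S^2" by (simp add: d0_def power_divide power_mult_distrib)
  also have "\<dots> \<le> \<beta>*k*(1-Z)/S^2"
  proof -
    have "(1-Z)*(1-Z) \<le> (1-Z)*1" using Z by (intro mult_left_mono) auto
    then have "(1-Z)^2 \<le> 1-Z" by (simp add: power2_eq_square)
    then have "k^2*(1-Z)^2 \<le> k^2*(1-Z)" by (intro mult_left_mono) auto
    also have "\<dots> \<le> \<beta>*k*(1-Z)" using k Z
      by (intro mult_right_mono) (auto simp: power2_eq_square mult_right_mono)
    finally show ?thesis using S by (simp add: divide_right_mono)
  qed
  finally have e2: "d^2 \<le> \<beta>*k*(1-Z)/S^2" .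
  have e3: "(Z-z)*(d-d0) \<le> d0-d"
  proof -
    have "\<bar>Z - z\<bar> \<le> 1" using Z z by auto
    then have "\<bar>Z-z\<bar>*(d0-d) \<le> 1*(d0-d)" using e0 by (intro mult_right_mono) auto
    moreover have "(z-Z)*(d0-d) \<le> \<bar>Z-z\<bar>*(d0-d)" using e0 by (intro mult_right_mono) auto
    moreover have "(Z-z)*(d-d0) = (z-Z)*(d0-d)" by (simp add: algebra_simps)
    ultimately show ?thesis by simp
  qed
  have sq: "(Z + d - z)^2 = (Z-z)^2 + 2*(Z-z)*d0 + 2*((Z-z)*(d-d0)) + d^2"
    by (simp add: power2_eq_square algebra_simps)
  have part1: "(Z + d - z)^2 \<le> (Z-z)^2 + k*(2*(Z-z)*(1-Z)/S) + 3*(\<beta>*k*(1-Z)/S^2)"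
  proof -
    have "2*(Z-z)*d0 = k*(2*(Z-z)*(1-Z)/S)" by (simp add: d0_def)
    then show ?thesis using lin_aux[OF sq e3 e1 e2] by simp
  qed
  have part2: "3*\<beta>/(S+k) \<le> 3*\<beta>/S - k*(3*\<beta>/S^2) + k*(3*\<beta>^2/S^3)"
  proof -
    have b0: "0 \<le> \<beta>" using k by linarith
    have "3*\<beta>*(1/(S+k)) \<le> 3*\<beta>*(1/S - k/S^2 + \<beta>*k/S^3)"
      using inv_bound[OF S k] b0 by (intro mult_left_mono) auto
    then show ?thesis by (simp add: algebra_simps power2_eq_square)
  qed
  show ?thesis unfolding dd using part1 part2 by (simp add: algebra_simps)
qed

lemma stepY:
  fixes S Z z k \<beta> :: real
  assumes S: "S > 0" and Z: "0 \<le> Z" "Z \<le> 1" and z: "0 \<le> z" "z \<le> 1" and k: "0 \<le> k" "k \<le> \<beta>"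
    and big: "2*\<beta> \<le> S"
  shows "((Z*S)/(S+k) - z)^2 + 3*\<beta>/(S+k) \<le>
     (Z-z)^2 + 3*\<beta>/S + k*(-2*(Z-z)*Z/S + 3*Z*\<beta>/S^2 - 3*\<beta>/S^2 + 3*\<beta>^2/S^3)"
proof -
  have Sk: "S + k > 0" using S k by linarith
  have eq1: "((1-Z)*S + k)/(S+k) - (1-z) = -((Z*S)/(S+k) - z)" using Sk
    by (simp add: field_simps)
  have "((Z*S)/(S+k) - z)^2 + 3*\<beta>/(S+k) = (((1-Z)*S + k)/(S+k) - (1-z))^2 + 3*\<beta>/(S+k)"
    unfolding eq1 by (simp only: power2_minus)
  also have "\<dots> \<le>
     ((1-Z)-(1-z))^2 + 3*\<beta>/S + k*(2*((1-Z)-(1-z))*(1-(1-Z))/S + 3*(1-(1-Z))*\<beta>/S^2 - 3*\<beta>/S^2 + 3*\<beta>^2/S^3)"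
    using assms by (intro stepX) auto
  also have "\<dots> = (Z-z)^2 + 3*\<beta>/S + k*(-2*(Z-z)*Z/S + 3*Z*\<beta>/S^2 - 3*\<beta>/S^2 + 3*\<beta>^2/S^3)"
    by (simp add: power2_eq_square algebra_simps)
  finally show ?thesis .
qed

lemma comb:
  fixes S Z z \<beta> :: real
  assumes S: "S > 0" and Z: "0 \<le> Z" "Z \<le> 1" and b: "0 \<le> \<beta>" and big: "2*\<beta> \<le> S"
  shows "Z*(2*(Z-z)*(1-Z)/S + 3*(1-Z)*\<beta>/S^2 - 3*\<beta>/S^2 + 3*\<beta>^2/S^3)
       + (1-Z)*(-2*(Z-z)*Z/S + 3*Z*\<beta>/S^2 - 3*\<beta>/S^2 + 3*\<beta>^2/S^3) \<le> 0"
proof -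
  have e: "Z*(2*(Z-z)*(1-Z)/S + 3*(1-Z)*\<beta>/S^2 - 3*\<beta>/S^2 + 3*\<beta>^2/S^3)
       + (1-Z)*(-2*(Z-z)*Z/S + 3*Z*\<beta>/S^2 - 3*\<beta>/S^2 + 3*\<beta>^2/S^3)
       = 6*(Z*(1-Z))*(\<beta>/S^2) - 3*(\<beta>/S^2) + 3*(\<beta>^2/S^3)"
    using S by (simp add: field_simps power2_eq_square power3_eq_cube)
  have z1: "Z*(1-Z) \<le> 1/4"
  proof -
    have "0 \<le> (Z - 1/2)^2" by simp
    then show ?thesis by (simp add: power2_eq_square algebra_simps)
  qed
  have bs: "0 \<le> \<beta>/S^2" using b S by simp
  have "6*(Z*(1-Z))*(\<beta>/S^2) \<le> 6*(1/4)*(\<beta>/S^2)" using z1 bs by (intro mult_right_mono) auto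
  moreover have "\<beta>^2/S^3 \<le> (1/2)*(\<beta>/S^2)"
  proof -
    have "\<beta>*\<beta> \<le> \<beta>*(S/2)" using b big by (intro mult_left_mono) auto
    then have "\<beta>*\<beta>/S^3 \<le> \<beta>*(S/2)/S^3" using S by (intro divide_right_mono) auto
    moreover have "\<beta>*(S/2)/S^3 = (1/2)*(\<beta>/S^2)" using S by (simp add: field_simps power2_eq_square power3_eq_cube)
    ultimately show ?thesis by (simp add: power2_eq_square)
  qed
  ultimately show ?thesis unfolding e by linarith
qed

definition phi :: "real \<Rightarrow> real \<Rightarrow> real \<Rightarrow> real \<Rightarrow> real" where
  "phi z \<beta> X Y = (X/(X+Y) - z)^2 + 3*\<beta>/(X+Y)"

lemma emeasure_unif_le:
  assumes "0 \<le> Z" "Z \<le> 1"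
  shows "emeasure unif {..Z} = ennreal Z" "emeasure unif {Z<..} = ennreal (1 - Z)"
proof -
  have "{0..1} \<inter> {..Z} = {0..Z}" using assms by auto
  then show "emeasure unif {..Z} = ennreal Z" using assms by (simp add: divide_ennreal_def)
  have "{0..1} \<inter> {Z<..} = {Z<..1}" using assms by auto
  then show "emeasure unif {Z<..} = ennreal (1 - Z)" using assms by (simp add: divide_ennreal_def)
qed

lemma phi_nonneg: "0 \<le> \<beta> \<Longrightarrow> 0 < X + Y \<Longrightarrow> 0 \<le> phi z \<beta> X Y"
  by (simp add: phi_def)

lemma half_bound:
  assumes P: "prob_on_interval \<beta> \<mu>" and f: "\<And>k. 0 \<le> k \<Longrightarrow> k \<le> \<beta> \<Longrightarrow> 0 \<le> f k \<and> f k \<le> p + k*A"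
    and fm: "f \<in> borel_measurable borel"
  shows "(\<integral>\<^sup>+v. ennreal (f (qc \<beta> \<mu> v)) \<partial>unif) \<le> ennreal (p + (\<integral>k. k \<partial>\<mu>)*A)"
    and "0 \<le> p + (\<integral>k. k \<partial>\<mu>)*A"
proof -
  interpret U: prob_space unif by (rule unif_prob)
  have b0: "0 \<le> \<beta>" using beta_nonneg[OF P] .
  have ia: "integrable unif (qc \<beta> \<mu>)"
    using P qc_range[OF P] b0 by (intro U.integrable_const_bound[where B=\<beta>]) auto
  have ib: "integrable unif (\<lambda>v. p + qc \<beta> \<mu> v * A)" using ia by auto
  have nn: "\<And>v. 0 \<le> p + qc \<beta> \<mu> v * A" using f qc_range[OF P] by (meson order.trans)
  have "(\<integral>\<^sup>+v. ennreal (f (qc \<beta> \<mu> v)) \<partial>unif) \<le> (\<integral>\<^sup>+v. ennreal (p + qc \<beta> \<mu> v * A) \<partial>unif)"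
    using f qc_range[OF P] by (intro nn_integral_mono ennreal_leI) auto
  also have "\<dots> = ennreal (\<integral>v. p + qc \<beta> \<mu> v * A \<partial>unif)"
    using ib nn by (intro nn_integral_eq_integral) auto
  also have "(\<integral>v. p + qc \<beta> \<mu> v * A \<partial>unif) = p + (\<integral>k. k \<partial>\<mu>)*A"
    using ia qc_integral[OF P] by (simp add: U.prob_space)
  finally show "(\<integral>\<^sup>+v. ennreal (f (qc \<beta> \<mu> v)) \<partial>unif) \<le> ennreal (p + (\<integral>k. k \<partial>\<mu>)*A)" .
  have "0 \<le> (\<integral>v. p + qc \<beta> \<mu> v * A \<partial>unif)" using nn by (intro integral_nonneg_AE) auto
  then show "0 \<le> p + (\<integral>k. k \<partial>\<mu>)*A" using ia qc_integral[OF P] by (simp add: U.prob_space)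
qed

lemma core:
  assumes P: "in_P m0 \<beta> \<mu> \<nu>" and m0: "0 < m0"
    and X: "0 \<le> X" "0 \<le> Y" "0 < X + Y" "2*\<beta> \<le> X + Y" and z: "0 \<le> z" "z \<le> 1"
  shows "(\<integral>\<^sup>+u. (if u \<le> X/(X+Y) then \<integral>\<^sup>+v. ennreal (phi z \<beta> (X + qc \<beta> \<mu> v) Y) \<partial>unif
                  else \<integral>\<^sup>+w. ennreal (phi z \<beta> X (Y + qc \<beta> \<nu> w)) \<partial>unif) \<partial>unif)
         \<le> ennreal (phi z \<beta> X Y)"
proof -
  have Pm: "prob_on_interval \<beta> \<mu>" and Pn: "prob_on_interval \<beta> \<nu>"
    and mm: "(\<integral>k. k \<partial>\<mu>) = (\<integral>k. k \<partial>\<nu>)" and mpos: "m0 \<le> (\<integral>k. k \<partial>\<mu>)"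
    using P by (auto simp: in_P_def)
  define m where "m = (\<integral>k. k \<partial>\<mu>)"
  have m0': "0 \<le> m" using m0 mpos by (simp add: m_def)
  have b0: "0 \<le> \<beta>" using beta_nonneg[OF Pm] .
  define S where "S = X + Y"
  define Z where "Z = X / S"
  have S: "S > 0" using X by (simp add: S_def)
  have ZS: "Z*S = X" using S by (simp add: Z_def)
  have Z01: "0 \<le> Z" "Z \<le> 1" using X S by (auto simp: Z_def S_def)
  define p where "p = phi z \<beta> X Y"
  define A where "A = 2*(Z-z)*(1-Z)/S + 3*(1-Z)*\<beta>/S^2 - 3*\<beta>/S^2 + 3*\<beta>^2/S^3"
  define B where "B = -2*(Z-z)*Z/S + 3*Z*\<beta>/S^2 - 3*\<beta>/S^2 + 3*\<beta>^2/S^3"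
  have p_eq: "p = (Z-z)^2 + 3*\<beta>/S" by (simp add: p_def phi_def Z_def S_def)
  have fA: "0 \<le> phi z \<beta> (X + k) Y \<and> phi z \<beta> (X + k) Y \<le> p + k*A" if k: "0 \<le> k" "k \<le> \<beta>" for k
  proof
    show "0 \<le> phi z \<beta> (X + k) Y" using b0 X k by (intro phi_nonneg) auto
    have "phi z \<beta> (X + k) Y = ((Z*S + k)/(S+k) - z)^2 + 3*\<beta>/(S+k)"
      unfolding ZS by (simp add: phi_def S_def algebra_simps)
    also have "\<dots> \<le> p + k*A" unfolding p_eq A_def
      using X S Z01 z k by (intro stepX) (auto simp: S_def)
    finally show "phi z \<beta> (X + k) Y \<le> p + k*A" .
  qed
  have fB: "0 \<le> phi z \<beta> X (Y + k) \<and> phi z \<beta> X (Y + k) \<le> p + k*B" if k: "0 \<le> k" "k \<le> \<beta>" for k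
  proof
    show "0 \<le> phi z \<beta> X (Y + k)" using b0 X k by (intro phi_nonneg) auto
    have "phi z \<beta> X (Y + k) = ((Z*S)/(S+k) - z)^2 + 3*\<beta>/(S+k)"
      unfolding ZS by (simp add: phi_def S_def algebra_simps)
    also have "\<dots> \<le> p + k*B" unfolding p_eq B_def
      using X S Z01 z k by (intro stepY) (auto simp: S_def)
    finally show "phi z \<beta> X (Y + k) \<le> p + k*B" .
  qed
  have mA: "(\<lambda>k. phi z \<beta> (X + k) Y) \<in> borel_measurable borel" by (simp add: phi_def)
  have mB: "(\<lambda>k. phi z \<beta> X (Y + k)) \<in> borel_measurable borel" by (simp add: phi_def)
  note h1 = half_bound[OF Pm, of "\<lambda>k. phi z \<beta> (X + k) Y" p A, OF fA mA]
  note h2 = half_bound[OF Pn, of "\<lambda>k. phi z \<beta> X (Y + k)" p B, OF fB mB]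
  define I1 where "I1 = (\<integral>\<^sup>+v. ennreal (phi z \<beta> (X + qc \<beta> \<mu> v) Y) \<partial>unif)"
  define I2 where "I2 = (\<integral>\<^sup>+w. ennreal (phi z \<beta> X (Y + qc \<beta> \<nu> w)) \<partial>unif)"
  have I1: "I1 \<le> ennreal (p + m*A)" "0 \<le> p + m*A" using h1 by (auto simp: I1_def m_def)
  have I2: "I2 \<le> ennreal (p + m*B)" "0 \<le> p + m*B" using h2 mm by (auto simp: I2_def m_def)
  have "(\<integral>\<^sup>+u. (if u \<le> X/(X+Y) then I1 else I2) \<partial>unif)
      = (\<integral>\<^sup>+u. I1 * indicator {..Z} u + I2 * indicator {Z<..} u \<partial>unif)"
    by (intro nn_integral_cong) (auto simp: Z_def S_def indicator_def)
  also have "\<dots> = I1 * emeasure unif {..Z} + I2 * emeasure unif {Z<..}"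
    by (subst nn_integral_add) (auto simp: nn_integral_cmult_indicator)
  also have "\<dots> = I1 * ennreal Z + I2 * ennreal (1-Z)" using emeasure_unif_le[OF Z01] by simp
  also have "\<dots> \<le> ennreal (p + m*A) * ennreal Z + ennreal (p + m*B) * ennreal (1-Z)"
    using I1 I2 by (intro add_mono mult_right_mono) auto
  also have "\<dots> = ennreal ((p + m*A)*Z + (p + m*B)*(1-Z))"
    using I1 I2 Z01 by (simp add: ennreal_mult[symmetric] ennreal_plus[symmetric] del: ennreal_plus)
  also have "\<dots> \<le> ennreal p"
  proof (rule ennreal_leI)
    have "Z*A + (1-Z)*B \<le> 0" unfolding A_def B_def using comb[OF S Z01 b0] X by (simp add: S_def)
    then have "m*(Z*A + (1-Z)*B) \<le> 0" using m0' by (simp add: mult_nonneg_nonpos)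
    moreover have "(p + m*A)*Z + (p + m*B)*(1-Z) = p + m*(Z*A + (1-Z)*B)" by (simp add: algebra_simps)
    ultimately show "(p + m*A)*Z + (p + m*B)*(1-Z) \<le> p" by linarith
  qed
  finally show ?thesis unfolding I1_def I2_def p_def .
qed

lemma (in prob_space) indep_XX:
  fixes U V W :: "nat \<Rightarrow> 'a \<Rightarrow> real"
  assumes U: "indep_vars (\<lambda>_. borel) U UNIV"
    and VW: "indep_vars (\<lambda>_. borel) (\<lambda>n \<omega>. (V n \<omega>, W n \<omega>)) UNIV"
    and UVW: "indep_var (Pi\<^sub>M UNIV (\<lambda>_. borel :: (real \<times> real) measure)) (\<lambda>\<omega> n. (U n \<omega>, 0))
        (Pi\<^sub>M UNIV (\<lambda>_. borel :: (real \<times> real) measure)) (\<lambda>\<omega> n. (V n \<omega>, W n \<omega>))"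
  shows "indep_vars (\<lambda>_. borel) (\<lambda>i \<omega>. case i of Inl k \<Rightarrow> (U k \<omega>, 0::real) | Inr k \<Rightarrow> (V k \<omega>, W k \<omega>)) UNIV"
proof -
  define XX where "XX = (\<lambda>i \<omega>. case i of Inl k \<Rightarrow> (U k \<omega>, 0::real) | Inr k \<Rightarrow> (V k \<omega>, W k \<omega>))"
  have rvU: "\<And>k. random_variable borel (U k)" using U unfolding indep_vars_def by auto
  have rvVW: "\<And>k. random_variable borel (\<lambda>\<omega>. (V k \<omega>, W k \<omega>))" using VW unfolding indep_vars_def by auto
  have rvX: "random_variable borel (XX i)" for i
  proof (cases i)
    case (Inl k) then show ?thesis using rvU[of k] by (simp add: XX_def)
  next
    case (Inr k) then show ?thesis using rvVW[of k] by (simp add: XX_def)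
  qed
  show ?thesis unfolding XX_def[symmetric] indep_vars_def2
  proof (intro conjI ballI indep_setsI)
    fix i show "random_variable borel (XX i)" by (rule rvX)
  next
    fix i show "{XX i -` A \<inter> space M |A. A \<in> sets borel} \<subseteq> events"
      using rvX[of i] by (auto intro: measurable_sets)
  next
    fix A J assume J: "J \<noteq> {}" "J \<subseteq> UNIV" "finite J"
      and A: "\<forall>j\<in>J. A j \<in> {XX j -` B \<inter> space M |B. B \<in> sets borel}"
    then have "\<forall>j\<in>J. \<exists>B. A j = XX j -` B \<inter> space M \<and> B \<in> sets borel" by blast
    from bchoice[OF this] obtain D where D0: "\<forall>j\<in>J. A j = XX j -` D j \<inter> space M \<and> D j \<in> sets borel"
      by blast
    then have D: "\<And>j. j \<in> J \<Longrightarrow> A j = XX j -` D j \<inter> space M \<and> D j \<in> sets borel" by blast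
    define JL where "JL = {k. Inl k \<in> J}"
    define JR where "JR = {k. Inr k \<in> J}"
    have fJL: "finite JL" using finite_vimageI[OF J(3), of Inl] by (simp add: JL_def vimage_def inj_def)
    have fJR: "finite JR" using finite_vimageI[OF J(3), of Inr] by (simp add: JR_def vimage_def inj_def)
    have Jeq: "J = Inl ` JL \<union> Inr ` JR"
    proof (intro equalityI subsetI)
      fix j assume "j \<in> J" then show "j \<in> Inl ` JL \<union> Inr ` JR"
        by (cases j) (auto simp: JL_def JR_def)
    qed (auto simp: JL_def JR_def)
    define BL where "BL = {f \<in> space (Pi\<^sub>M UNIV (\<lambda>_. borel :: (real \<times> real) measure)). \<forall>k\<in>JL. f k \<in> D (Inl k)}"
    define BR where "BR = {f \<in> space (Pi\<^sub>M UNIV (\<lambda>_. borel :: (real \<times> real) measure)). \<forall>k\<in>JR. f k \<in> D (Inr k)}"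
    have DL: "\<And>k. k \<in> JL \<Longrightarrow> D (Inl k) \<in> sets borel" using D by (auto simp: JL_def)
    have DR: "\<And>k. k \<in> JR \<Longrightarrow> D (Inr k) \<in> sets borel" using D by (auto simp: JR_def)
    have BLs: "BL \<in> sets (Pi\<^sub>M UNIV (\<lambda>_. borel :: (real \<times> real) measure))"
      unfolding BL_def
    proof (rule sets.sets_Collect_finite_All[OF _ fJL])
      fix k assume k: "k \<in> JL"
      have "(\<lambda>f. f k) -` D (Inl k) \<inter> space (Pi\<^sub>M UNIV (\<lambda>_. borel :: (real \<times> real) measure))
          \<in> sets (Pi\<^sub>M UNIV (\<lambda>_. borel :: (real \<times> real) measure))"
        using DL[OF k] by (intro measurable_sets[OF measurable_component_singleton]) auto
      then show "{f \<in> space (Pi\<^sub>M UNIV (\<lambda>_. borel :: (real \<times> real) measure)). f k \<in> D (Inl k)}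
          \<in> sets (Pi\<^sub>M UNIV (\<lambda>_. borel :: (real \<times> real) measure))"
        by (simp add: vimage_def Int_def conj_commute)
    qed
    have BRs: "BR \<in> sets (Pi\<^sub>M UNIV (\<lambda>_. borel :: (real \<times> real) measure))"
      unfolding BR_def
    proof (rule sets.sets_Collect_finite_All[OF _ fJR])
      fix k assume k: "k \<in> JR"
      have "(\<lambda>f. f k) -` D (Inr k) \<inter> space (Pi\<^sub>M UNIV (\<lambda>_. borel :: (real \<times> real) measure))
          \<in> sets (Pi\<^sub>M UNIV (\<lambda>_. borel :: (real \<times> real) measure))"
        using DR[OF k] by (intro measurable_sets[OF measurable_component_singleton]) auto
      then show "{f \<in> space (Pi\<^sub>M UNIV (\<lambda>_. borel :: (real \<times> real) measure)). f k \<in> D (Inr k)}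
          \<in> sets (Pi\<^sub>M UNIV (\<lambda>_. borel :: (real \<times> real) measure))"
        by (simp add: vimage_def Int_def conj_commute)
    qed
    let ?UL = "(\<lambda>\<omega> n. (U n \<omega>, 0::real))" and ?VR = "(\<lambda>\<omega> n. (V n \<omega>, W n \<omega>))"
    have inter: "(\<Inter>j\<in>J. A j) = (\<lambda>x. (?UL x, ?VR x)) -` (BL \<times> BR) \<inter> space M"
    proof -
      have "(\<Inter>j\<in>J. A j) = (\<Inter>j\<in>J. XX j -` D j \<inter> space M)" using D by auto
      also have "\<dots> = (\<lambda>x. (?UL x, ?VR x)) -` (BL \<times> BR) \<inter> space M"
      proof (intro equalityI subsetI)
        fix \<omega> assume w: "\<omega> \<in> (\<Inter>j\<in>J. XX j -` D j \<inter> space M)"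
        obtain j0 where "j0 \<in> J" using J(1) by auto
        then have sp: "\<omega> \<in> space M" using w by blast
        have "\<forall>k\<in>JL. (U k \<omega>, 0) \<in> D (Inl k)"
        proof
          fix k assume "k \<in> JL" then have "Inl k \<in> J" by (simp add: JL_def)
          then have "\<omega> \<in> XX (Inl k) -` D (Inl k) \<inter> space M" using w by blast
          then show "(U k \<omega>, 0) \<in> D (Inl k)" by (simp add: XX_def)
        qed
        moreover have "\<forall>k\<in>JR. (V k \<omega>, W k \<omega>) \<in> D (Inr k)"
        proof
          fix k assume "k \<in> JR" then have "Inr k \<in> J" by (simp add: JR_def)
          then have "\<omega> \<in> XX (Inr k) -` D (Inr k) \<inter> space M" using w by blast
          then show "(V k \<omega>, W k \<omega>) \<in> D (Inr k)" by (simp add: XX_def)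
        qed
        ultimately show "\<omega> \<in> (\<lambda>x. (?UL x, ?VR x)) -` (BL \<times> BR) \<inter> space M"
          using sp by (simp add: BL_def BR_def space_PiM)
      next
        fix \<omega> assume w: "\<omega> \<in> (\<lambda>x. (?UL x, ?VR x)) -` (BL \<times> BR) \<inter> space M"
        then have sp: "\<omega> \<in> space M" and L: "\<forall>k\<in>JL. (U k \<omega>, 0) \<in> D (Inl k)"
          and R: "\<forall>k\<in>JR. (V k \<omega>, W k \<omega>) \<in> D (Inr k)"
          by (auto simp: BL_def BR_def)
        show "\<omega> \<in> (\<Inter>j\<in>J. XX j -` D j \<inter> space M)"
        proof
          fix j assume "j \<in> J" then show "\<omega> \<in> XX j -` D j \<inter> space M"
            using sp L R by (cases j) (auto simp: JL_def JR_def XX_def)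
        qed
      qed
      finally show ?thesis .
    qed
    have "prob (\<Inter>j\<in>J. A j) = prob (?UL -` BL \<inter> space M) * prob (?VR -` BR \<inter> space M)"
      unfolding inter by (rule indep_varD[OF UVW BLs BRs])
    also have "prob (?UL -` BL \<inter> space M) = (\<Prod>k\<in>JL. prob (A (Inl k)))"
    proof (cases "JL = {}")
      case True then show ?thesis by (simp add: BL_def space_PiM prob_space)
    next
      case False
      have "?UL -` BL \<inter> space M = (\<Inter>k\<in>JL. U k -` {u. (u, 0) \<in> D (Inl k)} \<inter> space M)"
        using False by (auto simp: BL_def space_PiM)
      moreover have "prob (\<Inter>k\<in>JL. U k -` {u. (u, 0) \<in> D (Inl k)} \<inter> space M)
          = (\<Prod>k\<in>JL. prob (U k -` {u. (u, 0) \<in> D (Inl k)} \<inter> space M))"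
        using False fJL DL by (intro indep_varsD[OF U]) auto
      moreover have "\<And>k. k \<in> JL \<Longrightarrow> U k -` {u. (u, 0) \<in> D (Inl k)} \<inter> space M = A (Inl k)"
        using D by (auto simp: JL_def XX_def)
      ultimately show ?thesis by simp
    qed
    also have "prob (?VR -` BR \<inter> space M) = (\<Prod>k\<in>JR. prob (A (Inr k)))"
    proof (cases "JR = {}")
      case True then show ?thesis by (simp add: BR_def space_PiM prob_space)
    next
      case False
      have "?VR -` BR \<inter> space M = (\<Inter>k\<in>JR. (\<lambda>\<omega>. (V k \<omega>, W k \<omega>)) -` D (Inr k) \<inter> space M)"
        using False by (auto simp: BR_def space_PiM)
      moreover have "prob (\<Inter>k\<in>JR. (\<lambda>\<omega>. (V k \<omega>, W k \<omega>)) -` D (Inr k) \<inter> space M)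
          = (\<Prod>k\<in>JR. prob ((\<lambda>\<omega>. (V k \<omega>, W k \<omega>)) -` D (Inr k) \<inter> space M))"
        using False fJR DR by (intro indep_varsD[OF VW]) auto
      moreover have "\<And>k. k \<in> JR \<Longrightarrow> (\<lambda>\<omega>. (V k \<omega>, W k \<omega>)) -` D (Inr k) \<inter> space M = A (Inr k)"
        using D by (auto simp: JR_def XX_def)
      ultimately show ?thesis by simp
    qed
    also have "(\<Prod>k\<in>JL. prob (A (Inl k))) * (\<Prod>k\<in>JR. prob (A (Inr k))) = (\<Prod>j\<in>J. prob (A j))"
      unfolding Jeq using fJL fJR
      by (subst prod.union_disjoint) (auto simp: prod.reindex)
    finally show "prob (\<Inter>j\<in>J. A j) = (\<Prod>j\<in>J. prob (A j))" .
  qed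
qed

lemma (in prob_space) indep_nn:
  assumes ind: "indep_var S X T Y" and f: "f \<in> borel_measurable (S \<Otimes>\<^sub>M T)"
  shows "(\<integral>\<^sup>+\<omega>. f (X \<omega>, Y \<omega>) \<partial>M) = (\<integral>\<^sup>+x. \<integral>\<^sup>+y. f (x, y) \<partial>distr M T Y \<partial>distr M S X)"
proof -
  have rv: "random_variable S X" "random_variable T Y"
    and eq: "distr M S X \<Otimes>\<^sub>M distr M T Y = distr M (S \<Otimes>\<^sub>M T) (\<lambda>x. (X x, Y x))"
    using ind unfolding indep_var_distribution_eq by auto
  interpret DY: prob_space "distr M T Y" by (rule prob_space_distr[OF rv(2)])
  have "(\<integral>\<^sup>+\<omega>. f (X \<omega>, Y \<omega>) \<partial>M) = (\<integral>\<^sup>+p. f p \<partial>distr M (S \<Otimes>\<^sub>M T) (\<lambda>x. (X x, Y x)))"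
    using rv f by (subst nn_integral_distr) auto
  also have "\<dots> = (\<integral>\<^sup>+p. f p \<partial>(distr M S X \<Otimes>\<^sub>M distr M T Y))" by (simp add: eq)
  also have "\<dots> = (\<integral>\<^sup>+x. \<integral>\<^sup>+y. f (x, y) \<partial>distr M T Y \<partial>distr M S X)"
  proof (rule DY.nn_integral_fst[symmetric])
    show "f \<in> borel_measurable (distr M S X \<Otimes>\<^sub>M distr M T Y)"
      using f by (simp cong: measurable_cong_sets)
  qed
  finally show ?thesis .
qed

definition stepf :: "(real \<Rightarrow> real) \<Rightarrow> (real \<Rightarrow> real) \<Rightarrow> real \<times> real \<Rightarrow> real \<Rightarrow> real \<times> real \<Rightarrow> real \<times> real" where
  "stepf a b s u vw = (if u \<le> fst s / (fst s + snd s) then (fst s + a (fst vw), snd s) else (fst s, snd s + b (snd vw)))"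

fun stf :: "(real \<Rightarrow> real) \<Rightarrow> (real \<Rightarrow> real) \<Rightarrow> real \<Rightarrow> real \<Rightarrow> (nat + nat \<Rightarrow> real \<times> real) \<Rightarrow> nat \<Rightarrow> real \<times> real" where
  "stf a b x y f 0 = (x, y)"
| "stf a b x y f (Suc n) = stepf a b (stf a b x y f n) (fst (f (Inl (Suc n)))) (f (Inr (Suc n)))"

lemma rru_eq:
  "rru \<mu> \<nu> x y U V W n = stf (quantile \<mu>) (quantile \<nu>) x y (\<lambda>i. case i of Inl k \<Rightarrow> (U k, 0) | Inr k \<Rightarrow> (V k, W k)) n"
  by (induction n) (auto simp: stepf_def split: prod.split)

lemma stf_cong:
  assumes "\<And>k. 0 < k \<Longrightarrow> k \<le> n \<Longrightarrow> fst (f (Inl k)) = fst (g (Inl k)) \<and> a (fst (f (Inr k))) = a' (fst (g (Inr k)))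
      \<and> b (snd (f (Inr k))) = b' (snd (g (Inr k)))"
  shows "stf a b x y f n = stf a' b' x y g n"
  using assms by (induction n) (auto simp: stepf_def)

lemma stf_good:
  assumes "\<And>v. 0 \<le> a v" "\<And>v. 0 \<le> b v" "0 \<le> x" "0 \<le> y"
  shows "0 \<le> fst (stf a b x y f n) \<and> 0 \<le> snd (stf a b x y f n) \<and> x + y \<le> fst (stf a b x y f n) + snd (stf a b x y f n)"
proof (induction n)
  case (Suc n) then show ?case using assms(1,2)[of "fst (f (Inr (Suc n)))"] assms(1,2)[of "snd (f (Inr (Suc n)))"]
    by (auto simp: stepf_def add_increasing2)
qed (use assms in auto)

lemma bfst[measurable (raw)]:
  fixes g :: "'b \<Rightarrow> real \<times> real"
  assumes "g \<in> borel_measurable N" shows "(\<lambda>\<omega>. fst (g \<omega>)) \<in> borel_measurable N"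
proof -
  have "fst \<in> measurable (borel :: (real \<times> real) measure) borel" by (metis borel_prod measurable_fst)
  from measurable_compose[OF assms this] show ?thesis by (simp add: comp_def)
qed

lemma bsnd[measurable (raw)]:
  fixes g :: "'b \<Rightarrow> real \<times> real"
  assumes "g \<in> borel_measurable N" shows "(\<lambda>\<omega>. snd (g \<omega>)) \<in> borel_measurable N"
proof -
  have "snd \<in> measurable (borel :: (real \<times> real) measure) borel" by (metis borel_prod measurable_snd)
  from measurable_compose[OF assms this] show ?thesis by (simp add: comp_def)
qed

lemma stepf_meas2:
  fixes g k :: "'b \<Rightarrow> real \<times> real"
  assumes [measurable]: "a \<in> borel_measurable borel" "b \<in> borel_measurable borel"
    and [measurable]: "g \<in> borel_measurable N" "h \<in> borel_measurable N" "k \<in> borel_measurable N"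
  shows "(\<lambda>\<omega>. stepf a b (g \<omega>) (h \<omega>) (k \<omega>)) \<in> borel_measurable N"
  unfolding stepf_def by measurable

lemma stf_meas:
  assumes ab: "a \<in> borel_measurable borel" "b \<in> borel_measurable borel"
    and I: "\<And>k. 0 < k \<Longrightarrow> k \<le> n \<Longrightarrow> Inl k \<in> I \<and> Inr k \<in> I"
  shows "(\<lambda>f. stf a b x y f n) \<in> borel_measurable (Pi\<^sub>M I (\<lambda>_. borel :: (real \<times> real) measure))"
  using I
proof (induction n)
  case 0 then show ?case by simp
next
  case (Suc n)
  have l: "Inl (Suc n) \<in> I" and r: "Inr (Suc n) \<in> I" using Suc.prems[of "Suc n"] by auto
  have "(\<lambda>f. stf a b x y f n) \<in> borel_measurable (Pi\<^sub>M I (\<lambda>_. borel :: (real \<times> real) measure))"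
    using Suc by auto
  moreover have "(\<lambda>f. fst (f (Inl (Suc n)))) \<in> borel_measurable (Pi\<^sub>M I (\<lambda>_. borel :: (real \<times> real) measure))"
    using measurable_component_singleton[OF l, of "\<lambda>_. borel :: (real \<times> real) measure"] by (rule bfst) 
  moreover have "(\<lambda>f. f (Inr (Suc n))) \<in> borel_measurable (Pi\<^sub>M I (\<lambda>_. borel :: (real \<times> real) measure))"
    using measurable_component_singleton[OF r, of "\<lambda>_. borel :: (real \<times> real) measure"] by simp
  ultimately show ?case by (simp add: stepf_meas2[OF ab])
qed

lemma phi_meas[measurable]:
  assumes [measurable]: "f \<in> borel_measurable N" "g \<in> borel_measurable N"
  shows "(\<lambda>\<omega>. phi z \<beta> (f \<omega>) (g \<omega>)) \<in> borel_measurable N"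
  unfolding phi_def by measurable

lemma (in prob_space) nn_fst_distr:
  fixes Y :: "'a \<Rightarrow> real \<times> real"
  assumes Y: "Y \<in> borel_measurable M" and F: "F \<in> borel_measurable borel"
  shows "(\<integral>\<^sup>+q. F (fst q) \<partial>distr M borel Y) = (\<integral>\<^sup>+v. F v \<partial>distr M borel (\<lambda>\<omega>. fst (Y \<omega>)))"
proof -
  have "(\<integral>\<^sup>+q. F (fst q) \<partial>distr M borel Y) = (\<integral>\<^sup>+\<omega>. F (fst (Y \<omega>)) \<partial>M)"
    using Y F by (subst nn_integral_distr) (auto intro!: measurable_compose[OF bfst[OF measurable_ident_sets[OF refl]] F])
  also have "\<dots> = (\<integral>\<^sup>+v. F v \<partial>distr M borel (\<lambda>\<omega>. fst (Y \<omega>)))"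
    using Y F by (subst nn_integral_distr) (auto intro: bfst)
  finally show ?thesis .
qed

lemma (in prob_space) nn_snd_distr:
  fixes Y :: "'a \<Rightarrow> real \<times> real"
  assumes Y: "Y \<in> borel_measurable M" and F: "F \<in> borel_measurable borel"
  shows "(\<integral>\<^sup>+q. F (snd q) \<partial>distr M borel Y) = (\<integral>\<^sup>+v. F v \<partial>distr M borel (\<lambda>\<omega>. snd (Y \<omega>)))"
proof -
  have "(\<integral>\<^sup>+q. F (snd q) \<partial>distr M borel Y) = (\<integral>\<^sup>+\<omega>. F (snd (Y \<omega>)) \<partial>M)"
    using Y F by (subst nn_integral_distr) (auto intro!: measurable_compose[OF bsnd[OF measurable_ident_sets[OF refl]] F])
  also have "\<dots> = (\<integral>\<^sup>+v. F v \<partial>distr M borel (\<lambda>\<omega>. snd (Y \<omega>)))"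
    using Y F by (subst nn_integral_distr) (auto intro: bsnd)
  finally show ?thesis .
qed

lemma (in prob_space) inner:
  fixes XX :: "nat + nat \<Rightarrow> 'a \<Rightarrow> real \<times> real"
  assumes ind: "indep_vars (\<lambda>_. borel) XX UNIV"
    and dU: "\<And>k. distr M borel (\<lambda>\<omega>. fst (XX (Inl k) \<omega>)) = unif"
    and dV: "\<And>k. distr M borel (\<lambda>\<omega>. fst (XX (Inr k) \<omega>)) = unif"
    and dW: "\<And>k. distr M borel (\<lambda>\<omega>. snd (XX (Inr k) \<omega>)) = unif"
    and Pin: "in_P m0 \<beta> \<mu> \<nu>" and m0: "0 < m0" and xy: "0 < x + y" "2*\<beta> \<le> x + y" and z: "0 \<le> z" "z \<le> 1"
    and s: "0 \<le> fst s" "0 \<le> snd s" "x + y \<le> fst s + snd s"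
  shows "(\<integral>\<^sup>+\<omega>. ennreal (phi z \<beta> (fst (stepf (qc \<beta> \<mu>) (qc \<beta> \<nu>) s (fst (XX (Inl m) \<omega>)) (XX (Inr m) \<omega>)))
                 (snd (stepf (qc \<beta> \<mu>) (qc \<beta> \<nu>) s (fst (XX (Inl m) \<omega>)) (XX (Inr m) \<omega>)))) \<partial>M)
         \<le> ennreal (phi z \<beta> (fst s) (snd s))"
proof -
  have Pm: "prob_on_interval \<beta> \<mu>" and Pn: "prob_on_interval \<beta> \<nu>" using Pin by (auto simp: in_P_def)
  have am[measurable]: "qc \<beta> \<mu> \<in> borel_measurable borel" by (rule qc_meas[OF Pm])
  have bm[measurable]: "qc \<beta> \<nu> \<in> borel_measurable borel" by (rule qc_meas[OF Pn])
  have rvX[measurable]: "\<And>i. XX i \<in> borel_measurable M" using ind unfolding indep_vars_def by auto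
  define G where "G = (\<lambda>p :: real \<times> real. ennreal (phi z \<beta> (fst p) (snd p)))"
  have Gm[measurable]: "G \<in> borel_measurable borel" unfolding G_def
    by (intro measurable_compose[OF _ measurable_ennreal] phi_meas bfst bsnd measurable_ident_sets) auto
  define Zs where "Zs = fst s / (fst s + snd s)"
  define F1 where "F1 = (\<lambda>v. G (fst s + qc \<beta> \<mu> v, snd s))"
  define F2 where "F2 = (\<lambda>w. G (fst s, snd s + qc \<beta> \<nu> w))"
  have F1m[measurable]: "F1 \<in> borel_measurable borel" unfolding F1_def
    by (intro measurable_compose[OF _ Gm] borel_measurable_Pair) auto
  have F2m[measurable]: "F2 \<in> borel_measurable borel" unfolding F2_def
    by (intro measurable_compose[OF _ Gm] borel_measurable_Pair) auto
  define I1 where "I1 = (\<integral>\<^sup>+v. F1 v \<partial>unif)"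
  define I2 where "I2 = (\<integral>\<^sup>+w. F2 w \<partial>unif)"
  have ind3: "indep_var borel (XX (Inl m)) borel (XX (Inr m))"
  proof -
    have i: "indep_var (Pi\<^sub>M {Inl m} (\<lambda>_. borel)) (\<lambda>\<omega>. restrict (\<lambda>i. XX i \<omega>) {Inl m})
                       (Pi\<^sub>M {Inr m} (\<lambda>_. borel)) (\<lambda>\<omega>. restrict (\<lambda>i. XX i \<omega>) {Inr m})"
      by (rule indep_var_restrict[OF ind]) auto
    have c1: "(\<lambda>f. f (Inl m)) \<in> measurable (Pi\<^sub>M {Inl m} (\<lambda>_. borel :: (real \<times> real) measure)) borel"
      by (rule measurable_component_singleton) simp
    have c2: "(\<lambda>f. f (Inr m)) \<in> measurable (Pi\<^sub>M {Inr m} (\<lambda>_. borel :: (real \<times> real) measure)) borel"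
      by (rule measurable_component_singleton) simp
    from indep_var_compose[OF i c1 c2] show ?thesis by (simp add: comp_def)
  qed
  define K where "K = (\<lambda>(p :: real \<times> real, q :: real \<times> real). G (stepf (qc \<beta> \<mu>) (qc \<beta> \<nu>) s (fst p) q))"
  have Km: "K \<in> borel_measurable (borel \<Otimes>\<^sub>M borel)" unfolding K_def split_beta'
    by (intro measurable_compose[OF _ Gm] stepf_meas2 am bm bfst measurable_fst'' measurable_snd'' measurable_const
        measurable_ident_sets) auto
  have "(\<integral>\<^sup>+\<omega>. G (stepf (qc \<beta> \<mu>) (qc \<beta> \<nu>) s (fst (XX (Inl m) \<omega>)) (XX (Inr m) \<omega>)) \<partial>M)
      = (\<integral>\<^sup>+\<omega>. K (XX (Inl m) \<omega>, XX (Inr m) \<omega>) \<partial>M)" by (simp add: K_def)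
  also have "\<dots> = (\<integral>\<^sup>+p. \<integral>\<^sup>+q. K (p, q) \<partial>distr M borel (XX (Inr m)) \<partial>distr M borel (XX (Inl m)))"
    by (rule indep_nn[OF ind3 Km])
  also have "\<dots> = (\<integral>\<^sup>+p. (if fst p \<le> Zs then I1 else I2) \<partial>distr M borel (XX (Inl m)))"
  proof (intro nn_integral_cong)
    fix p :: "real \<times> real"
    show "(\<integral>\<^sup>+q. K (p, q) \<partial>distr M borel (XX (Inr m))) = (if fst p \<le> Zs then I1 else I2)"
    proof (cases "fst p \<le> Zs")
      case True
      then have "(\<integral>\<^sup>+q. K (p, q) \<partial>distr M borel (XX (Inr m))) = (\<integral>\<^sup>+q. F1 (fst q) \<partial>distr M borel (XX (Inr m)))"
        by (simp add: K_def F1_def stepf_def Zs_def)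
      also have "\<dots> = I1" unfolding I1_def by (subst nn_fst_distr) (auto simp: dV)
      finally show ?thesis using True by simp
    next
      case False
      then have "(\<integral>\<^sup>+q. K (p, q) \<partial>distr M borel (XX (Inr m))) = (\<integral>\<^sup>+q. F2 (snd q) \<partial>distr M borel (XX (Inr m)))"
        by (simp add: K_def F2_def stepf_def Zs_def)
      also have "\<dots> = I2" unfolding I2_def by (subst nn_snd_distr) (auto simp: dW)
      finally show ?thesis using False by simp
    qed
  qed
  also have "\<dots> = (\<integral>\<^sup>+u. (if u \<le> Zs then I1 else I2) \<partial>unif)"
    by (subst nn_fst_distr[where F="\<lambda>u. if u \<le> Zs then I1 else I2"]) (auto simp: dU)
  also have "\<dots> \<le> ennreal (phi z \<beta> (fst s) (snd s))"
    unfolding Zs_def I1_def I2_def F1_def F2_def G_def fst_conv snd_conv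
    by (rule core[OF Pin m0]) (use s xy z in auto)
  finally show ?thesis by (simp add: G_def)
qed

lemma (in prob_space) step_ineq:
  fixes XX :: "nat + nat \<Rightarrow> 'a \<Rightarrow> real \<times> real"
  assumes ind: "indep_vars (\<lambda>_. borel) XX UNIV"
    and dU: "\<And>k. distr M borel (\<lambda>\<omega>. fst (XX (Inl k) \<omega>)) = unif"
    and dV: "\<And>k. distr M borel (\<lambda>\<omega>. fst (XX (Inr k) \<omega>)) = unif"
    and dW: "\<And>k. distr M borel (\<lambda>\<omega>. snd (XX (Inr k) \<omega>)) = unif"
    and Pin: "in_P m0 \<beta> \<mu> \<nu>" and m0: "0 < m0" and xy: "0 \<le> x" "0 \<le> y" "0 < x + y" "2*\<beta> \<le> x + y"
    and z: "0 \<le> z" "z \<le> 1"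
  shows "(\<integral>\<^sup>+\<omega>. ennreal (phi z \<beta> (fst (stf (qc \<beta> \<mu>) (qc \<beta> \<nu>) x y (\<lambda>i. XX i \<omega>) (Suc n)))
                                   (snd (stf (qc \<beta> \<mu>) (qc \<beta> \<nu>) x y (\<lambda>i. XX i \<omega>) (Suc n)))) \<partial>M)
       \<le> (\<integral>\<^sup>+\<omega>. ennreal (phi z \<beta> (fst (stf (qc \<beta> \<mu>) (qc \<beta> \<nu>) x y (\<lambda>i. XX i \<omega>) n))
                                   (snd (stf (qc \<beta> \<mu>) (qc \<beta> \<nu>) x y (\<lambda>i. XX i \<omega>) n))) \<partial>M)"
proof -
  have Pm: "prob_on_interval \<beta> \<mu>" and Pn: "prob_on_interval \<beta> \<nu>" using Pin by (auto simp: in_P_def)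
  define a where "a = qc \<beta> \<mu>"
  define b where "b = qc \<beta> \<nu>"
  have am[measurable]: "a \<in> borel_measurable borel" unfolding a_def by (rule qc_meas[OF Pm])
  have bm[measurable]: "b \<in> borel_measurable borel" unfolding b_def by (rule qc_meas[OF Pn])
  have a0: "\<And>v. 0 \<le> a v" unfolding a_def using qc_range[OF Pm] by auto
  have b0: "\<And>v. 0 \<le> b v" unfolding b_def using qc_range[OF Pn] by auto
  define G where "G = (\<lambda>p :: real \<times> real. ennreal (phi z \<beta> (fst p) (snd p)))"
  have Gm[measurable]: "G \<in> borel_measurable borel" unfolding G_def
    by (intro measurable_compose[OF _ measurable_ennreal] phi_meas bfst bsnd measurable_ident_sets) auto
  define m where "m = Suc n"
  define Aset where "Aset = Inl ` {..n} \<union> Inr ` {..n}"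
  define Bset where "Bset = {Inl m, Inr m}"
  let ?PA = "Pi\<^sub>M Aset (\<lambda>_. borel :: (real \<times> real) measure)"
  let ?PB = "Pi\<^sub>M Bset (\<lambda>_. borel :: (real \<times> real) measure)"
  have ind1: "indep_var ?PA (\<lambda>\<omega>. restrict (\<lambda>i. XX i \<omega>) Aset) ?PB (\<lambda>\<omega>. restrict (\<lambda>i. XX i \<omega>) Bset)"
    by (rule indep_var_restrict[OF ind]) (auto simp: Aset_def Bset_def m_def)
  have gA: "(\<lambda>f. stf a b x y f n) \<in> borel_measurable ?PA"
    by (rule stf_meas[OF am bm]) (auto simp: Aset_def)
  have Sn_eq: "\<And>\<omega>. stf a b x y (restrict (\<lambda>i. XX i \<omega>) Aset) n = stf a b x y (\<lambda>i. XX i \<omega>) n"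
    by (rule stf_cong) (auto simp: Aset_def)
  define H where "H = (\<lambda>(f, r). G (stepf a b (stf a b x y f n) (fst (r (Inl m))) (r (Inr m))))"
  have Hm: "H \<in> borel_measurable (?PA \<Otimes>\<^sub>M ?PB)"
  proof -
    have cl: "(\<lambda>f. f (Inl m)) \<in> measurable ?PB borel" by (rule measurable_component_singleton) (simp add: Bset_def)
    have cr: "(\<lambda>f. f (Inr m)) \<in> measurable ?PB borel" by (rule measurable_component_singleton) (simp add: Bset_def)
    have "(\<lambda>p. fst (snd p (Inl m))) \<in> borel_measurable (?PA \<Otimes>\<^sub>M ?PB)"
      by (intro bfst measurable_snd'' cl)
    moreover have "(\<lambda>p. snd p (Inr m)) \<in> borel_measurable (?PA \<Otimes>\<^sub>M ?PB)"
      by (intro measurable_snd'' cr)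
    moreover have "(\<lambda>p. stf a b x y (fst p) n) \<in> borel_measurable (?PA \<Otimes>\<^sub>M ?PB)"
      by (intro measurable_fst'' gA)
    ultimately have "(\<lambda>p. stepf a b (stf a b x y (fst p) n) (fst (snd p (Inl m))) (snd p (Inr m))) \<in> borel_measurable (?PA \<Otimes>\<^sub>M ?PB)"
      by (intro stepf_meas2[OF am bm])
    from measurable_compose[OF this Gm] show ?thesis by (simp add: H_def split_beta' comp_def)
  qed
  define RA where "RA = (\<lambda>\<omega>. restrict (\<lambda>i. XX i \<omega>) Aset)"
  define RB where "RB = (\<lambda>\<omega>. restrict (\<lambda>i. XX i \<omega>) Bset)"
  have RAm: "RA \<in> measurable M ?PA" using ind1 unfolding RA_def by (rule indep_var_rv1)
  have RBm: "RB \<in> measurable M ?PB" using ind1 unfolding RB_def by (rule indep_var_rv2)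
  have good: "0 \<le> fst (stf a b x y f n) \<and> 0 \<le> snd (stf a b x y f n) \<and> x + y \<le> fst (stf a b x y f n) + snd (stf a b x y f n)" for f
    using stf_good[OF a0 b0 xy(1,2), where f=f and n=n] by simp
  have "(\<integral>\<^sup>+\<omega>. G (stf a b x y (\<lambda>i. XX i \<omega>) (Suc n)) \<partial>M)
      = (\<integral>\<^sup>+\<omega>. H (RA \<omega>, RB \<omega>) \<partial>M)"
    by (intro nn_integral_cong) (simp add: H_def RA_def RB_def Sn_eq m_def Bset_def)
  also have "\<dots> = (\<integral>\<^sup>+f. \<integral>\<^sup>+r. H (f, r) \<partial>distr M ?PB RB \<partial>distr M ?PA RA)"
    unfolding RA_def RB_def by (rule indep_nn[OF ind1 Hm])
  also have "\<dots> \<le> (\<integral>\<^sup>+f. G (stf a b x y f n) \<partial>distr M ?PA RA)"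
  proof (rule nn_integral_mono)
    fix f assume fsp: "f \<in> space (distr M ?PA RA)"
    have "(\<integral>\<^sup>+r. H (f, r) \<partial>distr M ?PB RB) = (\<integral>\<^sup>+\<omega>. H (f, RB \<omega>) \<partial>M)"
      using RBm Hm fsp by (subst nn_integral_distr) (auto intro: measurable_Pair2)
    also have "\<dots> = (\<integral>\<^sup>+\<omega>. G (stepf a b (stf a b x y f n) (fst (XX (Inl m) \<omega>)) (XX (Inr m) \<omega>)) \<partial>M)"
      by (simp add: H_def RB_def Bset_def)
    also have "\<dots> \<le> G (stf a b x y f n)" unfolding G_def a_def b_def
      by (rule inner[OF ind dU dV dW Pin m0 xy(3,4) z]) (use good in \<open>auto simp: a_def b_def\<close>)
    finally show "(\<integral>\<^sup>+r. H (f, r) \<partial>distr M ?PB RB) \<le> G (stf a b x y f n)" .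
  qed
  also have "\<dots> = (\<integral>\<^sup>+\<omega>. G (stf a b x y (\<lambda>i. XX i \<omega>) n) \<partial>M)"
    using RAm gA by (subst nn_integral_distr) (auto simp: RA_def Sn_eq)
  finally show ?thesis by (simp add: G_def a_def b_def)
qed

lemma (in prob_space) bound_all:
  fixes XX :: "nat + nat \<Rightarrow> 'a \<Rightarrow> real \<times> real"
  assumes ind: "indep_vars (\<lambda>_. borel) XX UNIV"
    and dU: "\<And>k. distr M borel (\<lambda>\<omega>. fst (XX (Inl k) \<omega>)) = unif"
    and dV: "\<And>k. distr M borel (\<lambda>\<omega>. fst (XX (Inr k) \<omega>)) = unif"
    and dW: "\<And>k. distr M borel (\<lambda>\<omega>. snd (XX (Inr k) \<omega>)) = unif"
    and Pin: "in_P m0 \<beta> \<mu> \<nu>" and m0: "0 < m0" and xy: "0 \<le> x" "0 \<le> y" "0 < x + y" "2*\<beta> \<le> x + y"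
    and z: "0 \<le> z" "z \<le> 1"
  shows "(\<integral>\<^sup>+\<omega>. ennreal (phi z \<beta> (fst (stf (qc \<beta> \<mu>) (qc \<beta> \<nu>) x y (\<lambda>i. XX i \<omega>) n))
                                   (snd (stf (qc \<beta> \<mu>) (qc \<beta> \<nu>) x y (\<lambda>i. XX i \<omega>) n))) \<partial>M)
       \<le> ennreal (phi z \<beta> x y)"
proof (induction n)
  case 0 then show ?case by (simp add: emeasure_space_1)
next
  case (Suc n)
  from step_ineq[OF ind dU dV dW Pin m0 xy z, of n] Suc show ?case by (rule order.trans)
qed

theorem lemma3p2:
  fixes m0 \<beta> x y :: real and \<mu> \<nu> :: "real measure"
    and M :: "'a measure" and U V W :: "nat \<Rightarrow> 'a \<Rightarrow> real" and Zinf :: "'a \<Rightarrow> real"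
  assumes "0 < m0" and "m0 \<le> \<beta>"
    and P: "in_P m0 \<beta> \<mu> \<nu>"
    and S: "x \<ge> 0" "y \<ge> 0" "(x, y) \<noteq> (0, 0)"
    and big: "x + y \<ge> 2 * \<beta>"
    and ps: "prob_space M"
    and U_indep: "prob_space.indep_vars M (\<lambda>_. borel) U UNIV"
    and U_unif: "\<And>n. distr M borel (U n) = uniform_measure lborel {0..1}"
    and VW_indep: "prob_space.indep_vars M (\<lambda>_. borel) (\<lambda>n \<omega>. (V n \<omega>, W n \<omega>)) UNIV"
    and VW_ident: "\<And>n. distr M borel (\<lambda>\<omega>. (V n \<omega>, W n \<omega>)) = distr M borel (\<lambda>\<omega>. (V 0 \<omega>, W 0 \<omega>))"
    and V_unif: "\<And>n. distr M borel (V n) = uniform_measure lborel {0..1}"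
    and W_unif: "\<And>n. distr M borel (W n) = uniform_measure lborel {0..1}"
    and U_VW_indep: "prob_space.indep_var M
        (Pi\<^sub>M UNIV (\<lambda>_. borel :: (real \<times> real) measure)) (\<lambda>\<omega> n. (U n \<omega>, 0))
        (Pi\<^sub>M UNIV (\<lambda>_. borel :: (real \<times> real) measure)) (\<lambda>\<omega> n. (V n \<omega>, W n \<omega>))"
    and Zinf_meas: "Zinf \<in> borel_measurable M"
    and Zinf_lim: "AE \<omega> in M. (\<lambda>n. rru_Z \<mu> \<nu> x y (\<lambda>k. U k \<omega>) (\<lambda>k. V k \<omega>) (\<lambda>k. W k \<omega>) n)
                      \<longlonglongrightarrow> Zinf \<omega>"
  shows "wasserstein1 (distr M borel Zinf) (return borel (x / (x + y)))
           < ennreal (2 * sqrt (\<beta> / (x + y)))"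

proof -
  interpret prob_space M by (rule ps)
  have Pm: "prob_on_interval \<beta> \<mu>" and Pn: "prob_on_interval \<beta> \<nu>" using P by (auto simp: in_P_def)
  have bpos: "0 < \<beta>" using assms(1,2) by linarith
  have Spos: "0 < x + y" using S by (cases "x = 0") auto
  define XX where "XX = (\<lambda>i \<omega>. case i of Inl k \<Rightarrow> (U k \<omega>, 0::real) | Inr k \<Rightarrow> (V k \<omega>, W k \<omega>))"
  have ind: "indep_vars (\<lambda>_. borel) XX UNIV" unfolding XX_def by (rule indep_XX[OF U_indep VW_indep U_VW_indep])
  have rvX: "\<And>i. XX i \<in> borel_measurable M" using ind unfolding indep_vars_def by auto
  have dU: "\<And>k. distr M borel (\<lambda>\<omega>. fst (XX (Inl k) \<omega>)) = unif" using U_unif by (simp add: XX_def)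
  have dV: "\<And>k. distr M borel (\<lambda>\<omega>. fst (XX (Inr k) \<omega>)) = unif" using V_unif by (simp add: XX_def)
  have dW: "\<And>k. distr M borel (\<lambda>\<omega>. snd (XX (Inr k) \<omega>)) = unif" using W_unif by (simp add: XX_def)
  have Vm: "V k \<in> borel_measurable M" for k
    using bfst[OF rvX[of "Inr k"]] by (simp add: XX_def)
  have Wm: "W k \<in> borel_measurable M" for k
    using bsnd[OF rvX[of "Inr k"]] by (simp add: XX_def)
  define z where "z = x / (x + y)"
  have z01: "0 \<le> z" "z \<le> 1" using S Spos by (auto simp: z_def)
  define a where "a = qc \<beta> \<mu>"
  define b where "b = qc \<beta> \<nu>"
  define st where "st = (\<lambda>n \<omega>. stf a b x y (\<lambda>i. XX i \<omega>) n)"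
  define Zn where "Zn = (\<lambda>n \<omega>. fst (st n \<omega>) / (fst (st n \<omega>) + snd (st n \<omega>)))"
  have a0: "\<And>v. 0 \<le> a v" unfolding a_def using qc_range[OF Pm] by auto
  have b0: "\<And>v. 0 \<le> b v" unfolding b_def using qc_range[OF Pn] by auto
  have bnd: "(\<integral>\<^sup>+\<omega>. ennreal ((Zn n \<omega> - z)^2) \<partial>M) \<le> ennreal (3*\<beta>/(x+y))" for n
  proof -
    have "(\<integral>\<^sup>+\<omega>. ennreal ((Zn n \<omega> - z)^2) \<partial>M) \<le> (\<integral>\<^sup>+\<omega>. ennreal (phi z \<beta> (fst (st n \<omega>)) (snd (st n \<omega>))) \<partial>M)"
    proof (intro nn_integral_mono ennreal_leI)
      fix \<omega>
      have "x + y \<le> fst (st n \<omega>) + snd (st n \<omega>)" using stf_good[OF a0 b0 S(1,2)] by (simp add: st_def)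
      then have "0 \<le> 3*\<beta>/(fst (st n \<omega>) + snd (st n \<omega>))" using bpos Spos by simp
      then show "(Zn n \<omega> - z)^2 \<le> phi z \<beta> (fst (st n \<omega>)) (snd (st n \<omega>))"
        by (simp add: phi_def Zn_def)
    qed
    also have "\<dots> \<le> ennreal (phi z \<beta> x y)" unfolding st_def a_def b_def
      by (rule bound_all[OF ind dU dV dW P assms(1) S(1,2) Spos big z01])
    also have "phi z \<beta> x y = 3*\<beta>/(x+y)" by (simp add: phi_def z_def)
    finally show ?thesis .
  qed
  have AEgood: "AE \<omega> in M. \<forall>k. V k \<omega> \<in> {0<..1} \<and> W k \<omega> \<in> {0<..1}"
  proof (subst AE_all_countable, intro allI AE_conjI)
    have u: "AE v in unif. v \<in> {0<..1}"
      by (rule AE_uniform_measureI) (auto intro: AE_mp[OF AE_lborel_singleton[of 0]])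
    fix k
    have "AE v in distr M borel (V k). v \<in> {0<..1}" unfolding V_unif[of k] by (rule u)
    then show "AE \<omega> in M. V k \<omega> \<in> {0<..1}"
      by (subst (asm) AE_distr_iff[OF Vm[of k]]) auto
    have "AE v in distr M borel (W k). v \<in> {0<..1}" unfolding W_unif[of k] by (rule u)
    then show "AE \<omega> in M. W k \<omega> \<in> {0<..1}"
      by (subst (asm) AE_distr_iff[OF Wm[of k]]) auto
  qed
  have Zconv: "AE \<omega> in M. (\<lambda>n. Zn n \<omega>) \<longlonglongrightarrow> Zinf \<omega>"
    using AEgood Zinf_lim
  proof eventually_elim
    case (elim \<omega>)
    have "rru_Z \<mu> \<nu> x y (\<lambda>k. U k \<omega>) (\<lambda>k. V k \<omega>) (\<lambda>k. W k \<omega>) n = Zn n \<omega>" for n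
    proof -
      have "rru \<mu> \<nu> x y (\<lambda>k. U k \<omega>) (\<lambda>k. V k \<omega>) (\<lambda>k. W k \<omega>) n = stf (quantile \<mu>) (quantile \<nu>) x y (\<lambda>i. XX i \<omega>) n"
        unfolding rru_eq XX_def by simp
      also have "\<dots> = st n \<omega>" unfolding st_def
        by (rule stf_cong) (use elim in \<open>auto simp: XX_def a_def b_def qc_eq\<close>)
      finally show ?thesis by (simp add: rru_Z_def Zn_def split: prod.split)
    qed
    then show ?case using elim by simp
  qed
  have XXm: "(\<lambda>\<omega> i. XX i \<omega>) \<in> measurable M (Pi\<^sub>M UNIV (\<lambda>_. borel :: (real \<times> real) measure))"
    by (rule measurable_PiM_single') (auto simp: rvX)
  have stm: "st n \<in> borel_measurable M" for n
  proof -
    have "(\<lambda>f. stf a b x y f n) \<in> borel_measurable (Pi\<^sub>M UNIV (\<lambda>_. borel :: (real \<times> real) measure))"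
      using qc_meas[OF Pm] qc_meas[OF Pn] unfolding a_def b_def by (intro stf_meas) auto
    from measurable_compose[OF XXm this] show ?thesis by (simp add: st_def)
  qed
  have Znm: "Zn n \<in> borel_measurable M" for n
    unfolding Zn_def using bfst[OF stm[of n]] bsnd[OF stm[of n]] by measurable
  have fat: "(\<integral>\<^sup>+\<omega>. ennreal ((Zinf \<omega> - z)^2) \<partial>M) \<le> ennreal (3*\<beta>/(x+y))"
  proof -
    have "(\<integral>\<^sup>+\<omega>. ennreal ((Zinf \<omega> - z)^2) \<partial>M) = (\<integral>\<^sup>+\<omega>. liminf (\<lambda>n. ennreal ((Zn n \<omega> - z)^2)) \<partial>M)"
      using Zconv
    proof (intro nn_integral_cong_AE, eventually_elim)
      case (elim \<omega>)
      have lim: "(\<lambda>n. ennreal ((Zn n \<omega> - z)^2)) \<longlonglongrightarrow> ennreal ((Zinf \<omega> - z)^2)"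
        by (intro tendsto_ennrealI tendsto_intros elim)
      show ?case by (subst lim_imp_Liminf[OF _ lim]) simp_all
    qed
    also have "\<dots> \<le> liminf (\<lambda>n. \<integral>\<^sup>+\<omega>. ennreal ((Zn n \<omega> - z)^2) \<partial>M)"
      by (rule nn_integral_liminf) (use Znm in measurable)
    also have "\<dots> \<le> ennreal (3*\<beta>/(x+y))"
      by (rule Liminf_le) (use bnd in auto)
    finally show ?thesis .
  qed
  have W: "wasserstein1 (distr M borel Zinf) (return borel z) \<le> (\<integral>\<^sup>+\<omega>. ennreal \<bar>Zinf \<omega> - z\<bar> \<partial>M)"
  proof -
    define \<pi> where "\<pi> = distr M (borel \<Otimes>\<^sub>M borel) (\<lambda>\<omega>. (Zinf \<omega>, z))"
    have pm: "(\<lambda>\<omega>. (Zinf \<omega>, z)) \<in> measurable M (borel \<Otimes>\<^sub>M borel)" using Zinf_meas by measurable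
    have "\<pi> \<in> {\<pi>. prob_space \<pi> \<and> sets \<pi> = sets (borel \<Otimes>\<^sub>M borel) \<and>
        distr \<pi> borel fst = distr M borel Zinf \<and> distr \<pi> borel snd = return borel z}"
    proof (intro CollectI conjI)
      show "prob_space \<pi>" unfolding \<pi>_def by (rule prob_space_distr[OF pm])
      show "sets \<pi> = sets (borel \<Otimes>\<^sub>M borel)" by (simp add: \<pi>_def)
      show "distr \<pi> borel fst = distr M borel Zinf"
        unfolding \<pi>_def using pm by (subst distr_distr) (auto simp: comp_def)
      show "distr \<pi> borel snd = return borel z"
        unfolding \<pi>_def using pm by (subst distr_distr) (auto simp: comp_def)
    qed
    then have "wasserstein1 (distr M borel Zinf) (return borel z) \<le> (\<integral>\<^sup>+ p. ennreal \<bar>fst p - snd p\<bar> \<partial>\<pi>)"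
      unfolding wasserstein1_def by (rule INF_lower)
    also have "\<dots> = (\<integral>\<^sup>+\<omega>. ennreal \<bar>Zinf \<omega> - z\<bar> \<partial>M)"
      unfolding \<pi>_def using pm by (subst nn_integral_distr) auto
    finally show ?thesis .
  qed
  define B where "B = 2 * sqrt (\<beta>/(x+y))"
  have Bpos: "0 < B" using bpos Spos by (simp add: B_def)
  have B2: "B^2 = 4*(\<beta>/(x+y))" using bpos Spos by (simp add: B_def power_mult_distrib)
  have pt: "\<bar>d\<bar> \<le> (1/(2*B)) * d^2 + B/2" for d :: real
  proof -
    have "0 \<le> (\<bar>d\<bar> - B)^2" by simp
    then have "2*B*\<bar>d\<bar> \<le> d^2 + B^2" by (simp add: power2_eq_square algebra_simps)
    then show ?thesis using Bpos by (simp add: field_simps power2_eq_square)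
  qed
  have "(\<integral>\<^sup>+\<omega>. ennreal \<bar>Zinf \<omega> - z\<bar> \<partial>M) \<le> (\<integral>\<^sup>+\<omega>. ennreal (1/(2*B)) * ennreal ((Zinf \<omega> - z)^2) + ennreal (B/2) \<partial>M)"
  proof (intro nn_integral_mono)
    fix \<omega>
    have "ennreal \<bar>Zinf \<omega> - z\<bar> \<le> ennreal ((1/(2*B)) * (Zinf \<omega> - z)^2 + B/2)" by (rule ennreal_leI[OF pt])
    also have "\<dots> = ennreal ((1/(2*B)) * (Zinf \<omega> - z)^2) + ennreal (B/2)"
      using Bpos by (intro ennreal_plus) auto
    also have "ennreal ((1/(2*B)) * (Zinf \<omega> - z)^2) = ennreal (1/(2*B)) * ennreal ((Zinf \<omega> - z)^2)"
      using Bpos by (intro ennreal_mult) auto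
    finally show "ennreal \<bar>Zinf \<omega> - z\<bar> \<le> ennreal (1/(2*B)) * ennreal ((Zinf \<omega> - z)^2) + ennreal (B/2)" .
  qed
  also have "\<dots> = ennreal (1/(2*B)) * (\<integral>\<^sup>+\<omega>. ennreal ((Zinf \<omega> - z)^2) \<partial>M) + ennreal (B/2)"
    using Zinf_meas by (subst nn_integral_add) (auto simp: nn_integral_cmult emeasure_space_1)
  also have "\<dots> \<le> ennreal (1/(2*B)) * ennreal (3*\<beta>/(x+y)) + ennreal (B/2)"
    using fat by (intro add_mono mult_left_mono) auto
  also have "\<dots> = ennreal ((1/(2*B)) * (3*\<beta>/(x+y))) + ennreal (B/2)"
    using Bpos bpos Spos by (subst ennreal_mult) auto
  also have "\<dots> = ennreal ((1/(2*B)) * (3*\<beta>/(x+y)) + B/2)"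
    using Bpos bpos Spos by (intro ennreal_plus[symmetric]) auto
  also have "\<dots> < ennreal B"
  proof (subst ennreal_less_iff)
    show "0 \<le> (1/(2*B)) * (3*\<beta>/(x+y)) + B/2" using Bpos bpos Spos by simp
    have "0 < \<beta>/(x+y)" using bpos Spos by simp
    then have "3*(\<beta>/(x+y)) < B^2" unfolding B2 by linarith
    then have "(1/(2*B)) * (3*(\<beta>/(x+y))) < (1/(2*B)) * B^2" using Bpos by (intro mult_strict_left_mono) auto
    also have "(1/(2*B)) * B^2 = B/2" using Bpos by (simp add: power2_eq_square)
    finally have h: "(1/(2*B)) * (3*(\<beta>/(x+y))) < B/2" .
    have eq: "3*\<beta>/(x+y) = 3*(\<beta>/(x+y))" by simp
    show "(1/(2*B)) * (3*\<beta>/(x+y)) + B/2 < B" unfolding eq using h by linarith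
  qed
  finally have "wasserstein1 (distr M borel Zinf) (return borel z) < ennreal B" by (rule le_less_trans[OF W])
  then show ?thesis by (simp add: B_def z_def)
qed

end
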